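(* Let $G=(V,E)$ be an $\alpha_i$-metric graph ($i\ge 0$ an integer) and let $x,y$ be a pair of mutually distant vertices of $G$. Then every vertex $v\in V$ satisfies $\max\{d(x,v),d(y,v)\}\le e(v)\le \max\{d(x,v),d(y,v)\}+3i+2$.
   Context: All graphs are finite, connected, unweighted, undirected, simple; $d(u,v)$ is the shortest-path distance. $I(u,v)=\{x: d(u,x)+d(x,v)=d(u,v)\}$. A graph is $\alpha_i$-metric if for all vertices $u,v,w,x$: whenever $v\in I(u,w)$, $w\in I(v,x)$ and $v,w$ are adjacent, then $d(u,x)\ge d(u,v)+d(v,x)-i$. $e(v)=\max_u d(u,v)$. Vertices $x,y$ are mutually distant if $e(x)=e(y)=d(x,y)$. *)

theory Defs
  imports Main
begin

definition simple_graph :: "'a set \<Rightarrow> ('a \<Rightarrow> 'a \<Rightarrow> bool) \<Rightarrow> bool" where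
  "simple_graph V E \<longleftrightarrow> finite V \<and> V \<noteq> {} \<and>
     (\<forall>u v. E u v \<longrightarrow> u \<in> V \<and> v \<in> V) \<and>
     (\<forall>u v. E u v \<longrightarrow> E v u) \<and> (\<forall>u. \<not> E u u)"

definition is_walk :: "('a \<Rightarrow> 'a \<Rightarrow> bool) \<Rightarrow> 'a list \<Rightarrow> bool" where
  "is_walk E p \<longleftrightarrow> p \<noteq> [] \<and> (\<forall>k < length p - 1. E (p ! k) (p ! Suc k))"

definition walk_len :: "('a \<Rightarrow> 'a \<Rightarrow> bool) \<Rightarrow> 'a \<Rightarrow> 'a \<Rightarrow> nat \<Rightarrow> bool" where
  "walk_len E u v n \<longleftrightarrow> (\<exists>p. is_walk E p \<and> hd p = u \<and> last p = v \<and> length p = Suc n)"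

definition connected_graph :: "'a set \<Rightarrow> ('a \<Rightarrow> 'a \<Rightarrow> bool) \<Rightarrow> bool" where
  "connected_graph V E \<longleftrightarrow> (\<forall>u\<in>V. \<forall>v\<in>V. \<exists>n. walk_len E u v n)"

definition gdist :: "('a \<Rightarrow> 'a \<Rightarrow> bool) \<Rightarrow> 'a \<Rightarrow> 'a \<Rightarrow> nat" where
  "gdist E u v = (LEAST n. walk_len E u v n)"

definition interval :: "'a set \<Rightarrow> ('a \<Rightarrow> 'a \<Rightarrow> bool) \<Rightarrow> 'a \<Rightarrow> 'a \<Rightarrow> 'a set" where
  "interval V E u v = {x \<in> V. gdist E u x + gdist E x v = gdist E u v}"

definition alpha_metric :: "nat \<Rightarrow> 'a set \<Rightarrow> ('a \<Rightarrow> 'a \<Rightarrow> bool) \<Rightarrow> bool" where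
  "alpha_metric i V E \<longleftrightarrow>
     (\<forall>u\<in>V. \<forall>v\<in>V. \<forall>w\<in>V. \<forall>x\<in>V.
        v \<in> interval V E u w \<and> w \<in> interval V E v x \<and> E v w \<longrightarrow>
        int (gdist E u x) \<ge> int (gdist E u v) + int (gdist E v x) - int i)"

definition ecc :: "'a set \<Rightarrow> ('a \<Rightarrow> 'a \<Rightarrow> bool) \<Rightarrow> 'a \<Rightarrow> nat" where
  "ecc V E v = Max ((\<lambda>u. gdist E u v) ` V)"

definition mutually_distant :: "'a set \<Rightarrow> ('a \<Rightarrow> 'a \<Rightarrow> bool) \<Rightarrow> 'a \<Rightarrow> 'a \<Rightarrow> bool" where
  "mutually_distant V E x y \<longleftrightarrow>
     ecc V E x = ecc V E y \<and> ecc V E y = gdist E x y"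

end

theory Submission
  imports Defs
begin

lemma walk_len_0: "walk_len E u v 0 \<longleftrightarrow> u = v"
proof
  assume "walk_len E u v 0"
  then obtain p where "is_walk E p" "hd p = u" "last p = v" "length p = 1"
    unfolding walk_len_def by auto
  then obtain a where "p = [a]" by (cases p) auto
  then show "u = v" using \<open>hd p = u\<close> \<open>last p = v\<close> by simp
next
  assume "u = v"
  then show "walk_len E u v 0" unfolding walk_len_def is_walk_def
    by (intro exI[of _ "[u]"]) simp
qed

lemma walk_len_Suc: "walk_len E u v (Suc n) \<longleftrightarrow> (\<exists>w. E u w \<and> walk_len E w v n)"
proof
  assume "walk_len E u v (Suc n)"
  then obtain p where p: "is_walk E p" "hd p = u" "last p = v" "length p = Suc (Suc n)"
    unfolding walk_len_def by auto
  then obtain q where pq: "p = u # q" by (cases p) auto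
  with p have q: "q \<noteq> []" "length q = Suc n" "last q = v" by auto
  have w: "is_walk E q" unfolding is_walk_def
  proof (intro conjI allI impI)
    show "q \<noteq> []" by fact
    fix k assume "k < length q - 1"
    then have "Suc k < length p - 1" using pq by simp
    then have "E (p ! Suc k) (p ! Suc (Suc k))" using p(1) unfolding is_walk_def by blast
    then show "E (q ! k) (q ! Suc k)" using pq by simp
  qed
  have "E (p ! 0) (p ! Suc 0)" using p(1,4) unfolding is_walk_def by auto
  then have "E u (hd q)" using pq q(1) by (simp add: hd_conv_nth)
  moreover have "walk_len E (hd q) v n" unfolding walk_len_def using w q by auto
  ultimately show "\<exists>w. E u w \<and> walk_len E w v n" by blast
next
  assume "\<exists>w. E u w \<and> walk_len E w v n"
  then obtain w q where e: "E u w" and q: "is_walk E q" "hd q = w" "last q = v" "length q = Suc n"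
    unfolding walk_len_def by auto
  have "is_walk E (u # q)" unfolding is_walk_def
  proof (intro conjI allI impI)
    show "u # q \<noteq> []" by simp
    fix k assume k: "k < length (u # q) - 1"
    show "E ((u # q) ! k) ((u # q) ! Suc k)"
    proof (cases k)
      case 0
      then show ?thesis using e q by (cases q) auto
    next
      case (Suc k')
      then have "k' < length q - 1" using k by simp
      then show ?thesis using q(1) Suc unfolding is_walk_def by simp
    qed
  qed
  then show "walk_len E u v (Suc n)" unfolding walk_len_def using q
    by (intro exI[of _ "u # q"]) auto
qed

lemma walk_len_append: "walk_len E u v a \<Longrightarrow> walk_len E v w b \<Longrightarrow> walk_len E u w (a + b)"
proof (induction a arbitrary: u)
  case 0
  then show ?case by (simp add: walk_len_0)
next
  case (Suc a)
  then obtain z where "E u z" "walk_len E z v a" by (auto simp: walk_len_Suc)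
  with Suc.IH[of z] Suc.prems show ?case by (auto simp: walk_len_Suc)
qed

lemma walk_len_rev:
  assumes sym: "\<forall>a b. E a b \<longrightarrow> E b a"
  shows "walk_len E u v n \<Longrightarrow> walk_len E v u n"
proof (induction n arbitrary: u)
  case 0
  then show ?case by (simp add: walk_len_0)
next
  case (Suc n)
  then obtain z where z: "E u z" "walk_len E z v n" by (auto simp: walk_len_Suc)
  then have "walk_len E v z n" using Suc.IH by blast
  moreover have "walk_len E z u 1" using z sym by (auto simp: walk_len_Suc walk_len_0)
  ultimately have "walk_len E v u (n + 1)" by (rule walk_len_append)
  then show ?case by simp
qed

locale amg =
  fixes V :: "'a set" and E :: "'a \<Rightarrow> 'a \<Rightarrow> bool" and i :: nat
  assumes sg: "simple_graph V E" and cg: "connected_graph V E" and am: "alpha_metric i V E"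
begin

abbreviation "d \<equiv> gdist E"

lemma Esym: "E a b \<Longrightarrow> E b a" using sg unfolding simple_graph_def by blast
lemma Eirr: "\<not> E a a" using sg unfolding simple_graph_def by blast
lemma EV: "E a b \<Longrightarrow> a \<in> V \<and> b \<in> V" using sg unfolding simple_graph_def by blast

lemma dwalk: "a \<in> V \<Longrightarrow> b \<in> V \<Longrightarrow> walk_len E a b (d a b)"
proof -
  assume "a \<in> V" "b \<in> V"
  then obtain n where "walk_len E a b n" using cg unfolding connected_graph_def by blast
  then show ?thesis unfolding gdist_def by (rule LeastI)
qed

lemma dle: "walk_len E a b n \<Longrightarrow> d a b \<le> n"
  unfolding gdist_def by (rule Least_le)

lemma dsym: "a \<in> V \<Longrightarrow> b \<in> V \<Longrightarrow> d a b = d b a"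
proof -
  assume V: "a \<in> V" "b \<in> V"
  have s: "\<forall>a b. E a b \<longrightarrow> E b a" using Esym by blast
  have "d b a \<le> d a b" using dle walk_len_rev[OF s dwalk[OF V]] by blast
  moreover have "d a b \<le> d b a" using dle walk_len_rev[OF s dwalk[OF V(2,1)]] by blast
  ultimately show ?thesis by simp
qed

lemma dtri: "a \<in> V \<Longrightarrow> b \<in> V \<Longrightarrow> c \<in> V \<Longrightarrow> d a c \<le> d a b + d b c"
proof -
  assume V: "a \<in> V" "b \<in> V" "c \<in> V"
  have "walk_len E a c (d a b + d b c)" using walk_len_append[OF dwalk[OF V(1,2)] dwalk[OF V(2,3)]] .
  then show ?thesis by (rule dle)
qed

lemma dself: "d a a = 0"
  using dle[of a a 0] by (simp add: walk_len_0)

lemma dzero: "a \<in> V \<Longrightarrow> b \<in> V \<Longrightarrow> d a b = 0 \<Longrightarrow> a = b"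
proof -
  assume V: "a \<in> V" "b \<in> V" and z: "d a b = 0"
  have "walk_len E a b (d a b)" using dwalk[OF V] .
  then show "a = b" using z by (simp add: walk_len_0)
qed

lemma dE: "E a b \<Longrightarrow> d a b = 1"
proof -
  assume e: "E a b"
  have "walk_len E a b 1" using e by (auto simp: walk_len_Suc walk_len_0)
  then have "d a b \<le> 1" by (rule dle)
  moreover have "d a b \<noteq> 0" using dzero EV[OF e] e Eirr by blast
  ultimately show ?thesis by simp
qed

lemma dstep: "a \<in> V \<Longrightarrow> b \<in> V \<Longrightarrow> d a b = Suc n \<Longrightarrow> \<exists>c. E a c \<and> d c b = n"
proof -
  assume V: "a \<in> V" "b \<in> V" and s: "d a b = Suc n"
  then have "walk_len E a b (Suc n)" using dwalk[OF V] by simp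
  then obtain c where c: "E a c" "walk_len E c b n" by (auto simp: walk_len_Suc)
  have "d c b \<le> n" using c dle by blast
  moreover have "d a b \<le> d a c + d c b" using dtri V EV[OF c(1)] by blast
  ultimately show ?thesis using c dE s by (intro exI[of _ c]) auto
qed

lemma alpha:
  assumes "a \<in> V" "b \<in> V" "c \<in> V" "e \<in> V"
    and "d a c = d a b + 1" and "d b e = d c e + 1" and "E b c"
  shows "d a b + d b e \<le> d a e + i"
proof -
  have bc: "d b c = 1" using dE assms(7) .
  have "b \<in> interval V E a c" using assms bc unfolding interval_def by simp
  moreover have "c \<in> interval V E b e" using assms bc unfolding interval_def by simp
  ultimately have "int (d a e) \<ge> int (d a b) + int (d b e) - int i"
    using am assms(1-4,7) unfolding alpha_metric_def by blast
  then show ?thesis by linarith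
qed

lemma pred_ex:
  assumes "v \<in> V" "u \<in> V" "w \<in> V" "d v w + d w u = d v u" "d v w = Suc t"
  shows "\<exists>p. E p w \<and> p \<in> V \<and> d v p = t \<and> d v p + d p u = d v u"
proof -
  have "d w v = Suc t" using dsym[OF assms(1,3)] assms(5) by simp
  then obtain c where c: "E w c" "d c v = t" using dstep assms by blast
  have cV: "c \<in> V" using EV c(1) by blast
  have cw: "E c w" using Esym c(1) .
  have vc: "d v c = t" using c(2) dsym[OF assms(1) cV] by simp
  have "d c u \<le> d c w + d w u" using dtri cV assms by blast
  moreover have "d c w = 1" using dE cw .
  moreover have "d v u \<le> d v c + d c u" using dtri cV assms by blast
  ultimately show ?thesis using vc cw cV assms by (intro exI[of _ c]) auto
qed

lemma slice:
  assumes "v \<in> V" "u \<in> V"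
  shows "\<forall>w w'. w \<in> V \<longrightarrow> w' \<in> V \<longrightarrow> d v w + d w u = d v u \<longrightarrow> d v w' + d w' u = d v u
    \<longrightarrow> d v w = t \<longrightarrow> d v w' = t \<longrightarrow> d w w' \<le> i + 1"
proof (induction t)
  case 0
  show ?case
  proof (intro allI impI)
    fix w w' assume h: "w \<in> V" "w' \<in> V" "d v w = 0" "d v w' = 0"
    have "v = w" using dzero[OF assms(1) h(1) h(3)] .
    moreover have "v = w'" using dzero[OF assms(1) h(2) h(4)] .
    ultimately have "w = v" "w' = v" by auto
    then show "d w w' \<le> i + 1" by (simp add: dself)
  qed
next
  case (Suc t)
  show ?case
  proof (intro allI impI)
    fix w w' assume wV: "w \<in> V" "w' \<in> V" and om: "d v w + d w u = d v u" "d v w' + d w' u = d v u"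
      and lv: "d v w = Suc t" "d v w' = Suc t"
    show "d w w' \<le> i + 1"
    proof (rule ccontr)
      assume big: "\<not> d w w' \<le> i + 1"
      obtain p where p: "E p w" "p \<in> V" "d v p = t" "d v p + d p u = d v u"
        using pred_ex[OF assms(1,2) wV(1) om(1) lv(1)] by blast
      obtain p' where p': "E p' w'" "p' \<in> V" "d v p' = t" "d v p' + d p' u = d v u"
        using pred_ex[OF assms(1,2) wV(2) om(2) lv(2)] by blast
      have pw: "d p w = 1" using dE p(1) .
      have p'w': "d p' w' = 1" using dE p'(1) .
      have "d w' w \<le> d w' p + d p w" using dtri wV p by blast
      have s1: "d w' w = d w w'" using dsym[OF wV(2,1)] .
      have s2: "d w' p = d p w'" using dsym[OF wV(2) p(2)] .
      have ge: "d w' p \<ge> d w w'"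
      proof (rule ccontr)
        assume "\<not> d w' p \<ge> d w w'"
        then have eq: "d w' w = d w' p + 1" using \<open>d w' w \<le> d w' p + d p w\<close> pw s1 by linarith
        have "d p u = d w u + 1" using om lv p by linarith
        then have "d w' p + d p u \<le> d w' u + i" using alpha[OF wV(2) p(2) wV(1) assms(2) eq _ p(1)] by simp
        then show False using om lv p big s1 \<open>\<not> d w' p \<ge> d w w'\<close> \<open>d w' w \<le> d w' p + d p w\<close> pw by linarith
      qed
      have IH: "d p p' \<le> i + 1" using Suc.IH p p' by blast
      have "d p w' \<le> d p p' + d p' w'" using dtri p p' wV by blast
      then have eq2: "d p w' = d p p' + 1" using IH ge s2 p'w' big by linarith
      have "d p' u = d w' u + 1" using om lv p' by linarith
      then have "d p p' + d p' u \<le> d p u + i" using alpha[OF p(2) p'(2) wV(2) assms(2) eq2 _ p'(1)] by simp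
      then show False using p p' IH ge s2 eq2 big by linarith
    qed
  qed
qed

lemma slice':
  assumes "v \<in> V" "u \<in> V" "w \<in> V" "w' \<in> V" "d v w + d w u = d v u" "d v w' + d w' u = d v u"
    "d v w = d v w'"
  shows "d w w' \<le> i + 1"
  using slice[OF assms(1,2), of "d v w", rule_format, OF assms(3,4,5,6) refl assms(7)[symmetric]] .

lemma minim:
  assumes V: "v \<in> V" "u \<in> V" "x \<in> V" "w \<in> V" and om: "d v w + d w u = d v u"
    and mn: "\<forall>w'. w' \<in> V \<and> d v w' + d w' u = d v u \<and> d v w' = d v w \<longrightarrow> d w x \<le> d w' x"
  shows "d u w + d w x \<le> d u x + i \<or> d v w + d w x \<le> d v x + i"
proof (cases "d w x")
  case 0
  then have "w = x" using dzero[OF V(4,3)] by simp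
  then show ?thesis by (simp add: dself)
next
  case (Suc n)
  then obtain r where r: "E w r" "d r x = n" using dstep V by blast
  have rV: "r \<in> V" using EV r(1) by blast
  have wr: "d w r = 1" "d r w = 1" using dE r(1) Esym by auto
  have t1: "d v r \<le> d v w + d w r" "d u r \<le> d u w + d w r" "d r u \<le> d r w + d w u"
    "d v u \<le> d v r + d r u"
    using dtri V rV by blast+
  have s: "d u r = d r u" "d u w = d w u" using dsym[OF V(2) rV] dsym[OF V(2,4)] by simp_all
  show ?thesis
  proof (cases "d v r = d v w + 1")
    case True
    have "d w x = d r x + 1" using Suc r by simp
    then show ?thesis using alpha[OF V(1) V(4) rV V(3) True _ r(1)] by simp
  next
    case F1: False
    show ?thesis
    proof (cases "d u r = d u w + 1")
      case True
      have "d w x = d r x + 1" using Suc r by simp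
      then show ?thesis using alpha[OF V(2) V(4) rV V(3) True _ r(1)] by simp
    next
      case False
      then have "d v r + d r u = d v u \<and> d v r = d v w" using F1 t1 s wr om by linarith
      then have "d w x \<le> d r x" using mn rV by blast
      then show ?thesis using Suc r by simp
    qed
  qed
qed

lemma pair:
  assumes V: "v \<in> V" "u \<in> V" "x \<in> V" "y \<in> V" "p \<in> V" "c \<in> V"
    and om: "d v p + d p u = d v u"
    and xu: "d u p + d p x \<le> d u x + i" and yv: "d v c + d c y \<le> d v y + i"
    and D: "d u x \<le> d x y"
  shows "d v u + d v c \<le> d v p + d p c + d v y + 2 * i"
proof -
  have "d x y \<le> d x p + d p y" "d p y \<le> d p c + d c y" using dtri V by blast+
  moreover have "d u p = d p u" "d x p = d p x" using dsym[OF V(2,5)] dsym[OF V(3,5)] by simp_all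
  ultimately show ?thesis using om xu yv D by linarith
qed

lemma tight:
  assumes V: "v \<in> V" "u \<in> V" "x \<in> V" "y \<in> V" "w \<in> V" "c \<in> V"
    and omw: "d v w + d w u = d v u" and omc: "d v c + d c u = d v u"
    and lv: "d v w = Suc a" "d v c = a"
    and xu: "d u w + d w x \<le> d u x + i" and nxv: "\<not> d v w + d w x \<le> d v x + i"
    and yv: "d v c + d c y \<le> d v y + i"
    and D: "d u x \<le> d x y"
  shows "d v u \<le> d v y + 3 * i + 2"
proof -
  obtain z where z: "E z w" "z \<in> V" "d v z = a" "d v z + d z u = d v u"
    using pred_ex[OF V(1,2,5) omw lv(1)] by blast
  have zw: "d z w = 1" using dE z(1) .
  have zx: "d z x \<le> d w x"
  proof (rule ccontr)
    assume a1: "\<not> d z x \<le> d w x"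
    have "d z x \<le> d z w + d w x" using dtri V z by blast
    then have eq: "d z x = d w x + 1" using a1 zw by linarith
    have "d v w = d v z + 1" using lv z by simp
    then have "d v z + d z x \<le> d v x + i" using alpha[OF V(1) z(2) V(5) V(3) _ eq z(1)] by simp
    then show False using nxv eq lv z by linarith
  qed
  have sl: "d z c \<le> i + 1" using slice'[OF V(1,2) z(2) V(6) z(4) omc] z lv by simp
  have "d x y \<le> d x z + d z y" "d z y \<le> d z c + d c y" using dtri V z by blast+
  moreover have "d u w = d w u" "d x z = d z x" using dsym[OF V(2,5)] dsym[OF V(3) z(2)] by simp_all
  ultimately show ?thesis using omw xu yv D zx sl lv by linarith
qed

lemma main_bound:
  assumes V: "v \<in> V" "u \<in> V" "x \<in> V" "y \<in> V"
    and Dx: "d u x \<le> d x y" and Dy: "d u y \<le> d x y"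
  shows "d v u \<le> max (d v x) (d v y) + 3 * i + 2"
proof -
  have Dy': "d u y \<le> d y x" using Dy dsym[OF V(3,4)] by simp
  define Om where "Om = (\<lambda>w. w \<in> V \<and> d v w + d w u = d v u)"
  define S where "S = (\<lambda>w. Om w \<and> (d u w + d w x \<le> d u x + i \<or> d u w + d w y \<le> d u y + i))"
  have "S u" unfolding S_def Om_def using V by (simp add: dself)
  then obtain w0 where w0: "S w0" and w0min: "\<forall>w. S w \<longrightarrow> d v w0 \<le> d v w"
    using ex_has_least_nat[of S u "d v"] by blast
  define a where "a = d v w0"
  have w0om: "Om w0" using w0 S_def by blast
  obtain wx where wx: "Om wx \<and> d v wx = a" and wxmin: "\<forall>w. Om w \<and> d v w = a \<longrightarrow> d wx x \<le> d w x"
    using ex_has_least_nat[of "\<lambda>w. Om w \<and> d v w = a" w0 "\<lambda>w. d w x"] w0om a_def by blast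
  obtain wy where wy: "Om wy \<and> d v wy = a" and wymin: "\<forall>w. Om w \<and> d v w = a \<longrightarrow> d wy y \<le> d w y"
    using ex_has_least_nat[of "\<lambda>w. Om w \<and> d v w = a" w0 "\<lambda>w. d w y"] w0om a_def by blast
  have wxV: "wx \<in> V" "d v wx + d wx u = d v u" using wx Om_def by auto
  have wyV: "wy \<in> V" "d v wy + d wy u = d v u" using wy Om_def by auto
  have w0V: "w0 \<in> V" "d v w0 + d w0 u = d v u" using w0om Om_def by auto
  have Nx: "d u wx + d wx x \<le> d u x + i \<or> d v wx + d wx x \<le> d v x + i"
    using minim[OF V(1,2,3) wxV] wx wxmin unfolding Om_def by auto
  have Ny: "d u wy + d wy y \<le> d u y + i \<or> d v wy + d wy y \<le> d v y + i"
    using minim[OF V(1,2,4) wyV] wy wymin unfolding Om_def by auto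
  have low: "Om c \<and> d v c < a \<Longrightarrow> \<not> (d u c + d c x \<le> d u x + i) \<and> \<not> (d u c + d c y \<le> d u y + i)" for c
    using w0min a_def unfolding S_def by fastforce
  show ?thesis
  proof (cases "d v wx + d wx x \<le> d v x + i \<and> d v wy + d wy y \<le> d v y + i")
    case True
    have sl1: "d w0 wy \<le> i + 1" using slice'[OF V(1,2) w0V(1) wyV(1) w0V(2) wyV(2)] wy a_def by simp
    have sl2: "d w0 wx \<le> i + 1" using slice'[OF V(1,2) w0V(1) wxV(1) w0V(2) wxV(2)] wx a_def by simp
    from w0 have "d u w0 + d w0 x \<le> d u x + i \<or> d u w0 + d w0 y \<le> d u y + i" unfolding S_def by blast
    then show ?thesis
    proof
      assume h: "d u w0 + d w0 x \<le> d u x + i"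
      have "d v u + d v wy \<le> d v w0 + d w0 wy + d v y + 2 * i"
        using pair[OF V(1,2,3,4) w0V(1) wyV(1) w0V(2) h _ Dx] True by blast
      then show ?thesis using sl1 wy a_def max.cobounded2[of "d v x" "d v y"] by linarith
    next
      assume h: "d u w0 + d w0 y \<le> d u y + i"
      have "d v u + d v wx \<le> d v w0 + d w0 wx + d v x + 2 * i"
        using pair[OF V(1,2,4,3) w0V(1) wxV(1) w0V(2) h _ Dy'] True by blast
      then show ?thesis using sl2 wx a_def max.cobounded1[of "d v x" "d v y"] by linarith
    qed
  next
    case False
    then have "\<not> d v wx + d wx x \<le> d v x + i \<or> \<not> d v wy + d wy y \<le> d v y + i" by blast
    then show ?thesis
    proof
      assume nx: "\<not> d v wx + d wx x \<le> d v x + i"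
      then have xu: "d u wx + d wx x \<le> d u x + i" using Nx by blast
      have "a \<noteq> 0"
      proof
        assume "a = 0"
        then have "wx = v" using dzero[OF V(1) wxV(1)] wx by simp
        then show False using nx by (simp add: dself)
      qed
      then obtain b where ab: "a = Suc b" by (cases a) auto
      obtain z where z: "E z wx" "z \<in> V" "d v z = b" "d v z + d z u = d v u"
        using pred_ex[OF V(1,2) wxV(1) wxV(2)] wx ab by blast
      obtain c where c: "Om c \<and> d v c = b" and cmin: "\<forall>w. Om w \<and> d v w = b \<longrightarrow> d c y \<le> d w y"
        using ex_has_least_nat[of "\<lambda>w. Om w \<and> d v w = b" z "\<lambda>w. d w y"] z Om_def by blast
      have cV: "c \<in> V" "d v c + d c u = d v u" using c Om_def by auto
      have "d u c + d c y \<le> d u y + i \<or> d v c + d c y \<le> d v y + i"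
        using minim[OF V(1,2,4) cV] c cmin unfolding Om_def by auto
      moreover have "\<not> d u c + d c y \<le> d u y + i" using low[of c] c ab by simp
      ultimately have yv: "d v c + d c y \<le> d v y + i" by blast
      have "d v u \<le> d v y + 3 * i + 2"
      proof -
        have l1: "d v wx = Suc b" using wx ab by simp
        have l2: "d v c = b" using c by simp
        show ?thesis using tight[OF V(1,2,3,4) wxV(1) cV(1) wxV(2) cV(2) l1 l2 xu nx yv Dx] .
      qed
      then show ?thesis using max.cobounded2[of "d v x" "d v y"] by linarith
    next
      assume ny: "\<not> d v wy + d wy y \<le> d v y + i"
      then have yu: "d u wy + d wy y \<le> d u y + i" using Ny by blast
      have "a \<noteq> 0"
      proof
        assume "a = 0"
        then have "wy = v" using dzero[OF V(1) wyV(1)] wy by simp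
        then show False using ny by (simp add: dself)
      qed
      then obtain b where ab: "a = Suc b" by (cases a) auto
      obtain z where z: "E z wy" "z \<in> V" "d v z = b" "d v z + d z u = d v u"
        using pred_ex[OF V(1,2) wyV(1) wyV(2)] wy ab by blast
      obtain c where c: "Om c \<and> d v c = b" and cmin: "\<forall>w. Om w \<and> d v w = b \<longrightarrow> d c x \<le> d w x"
        using ex_has_least_nat[of "\<lambda>w. Om w \<and> d v w = b" z "\<lambda>w. d w x"] z Om_def by blast
      have cV: "c \<in> V" "d v c + d c u = d v u" using c Om_def by auto
      have "d u c + d c x \<le> d u x + i \<or> d v c + d c x \<le> d v x + i"
        using minim[OF V(1,2,3) cV] c cmin unfolding Om_def by auto
      moreover have "\<not> d u c + d c x \<le> d u x + i" using low[of c] c ab by simp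
      ultimately have xv: "d v c + d c x \<le> d v x + i" by blast
      have "d v u \<le> d v x + 3 * i + 2"
      proof -
        have l1: "d v wy = Suc b" using wy ab by simp
        have l2: "d v c = b" using c by simp
        show ?thesis using tight[OF V(1,2,4,3) wyV(1) cV(1) wyV(2) cV(2) l1 l2 yu ny xv Dy'] .
      qed
      then show ?thesis using max.cobounded1[of "d v x" "d v y"] by linarith
    qed
  qed
qed

end

theorem lemma14:
  fixes V :: "'a set" and E :: "'a \<Rightarrow> 'a \<Rightarrow> bool" and i :: nat and x y v :: 'a
  assumes "simple_graph V E" and "connected_graph V E"
    and "alpha_metric i V E"
    and "x \<in> V" and "y \<in> V" and "mutually_distant V E x y"
    and "v \<in> V"
  shows "max (gdist E x v) (gdist E y v) \<le> ecc V E v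
       \<and> ecc V E v \<le> max (gdist E x v) (gdist E y v) + 3 * i + 2"
proof -
  interpret G: amg V E i using assms(1-3) by unfold_locales
  have fin: "finite V" "V \<noteq> {}" using assms(1) unfolding simple_graph_def by auto
  have ex: "gdist E x y = ecc V E x" "gdist E x y = ecc V E y"
    using assms(6) unfolding mutually_distant_def by auto
  have bnd: "\<And>z w. z \<in> V \<Longrightarrow> gdist E z w \<le> ecc V E w"
    unfolding ecc_def using fin by auto
  have lo: "max (gdist E x v) (gdist E y v) \<le> ecc V E v"
    using bnd assms(4,5) by auto
  have "\<forall>u\<in>V. gdist E u v \<le> max (gdist E x v) (gdist E y v) + 3 * i + 2"
  proof
    fix u assume u: "u \<in> V"
    have Dx: "gdist E u x \<le> gdist E x y" using bnd[OF u, of x] ex by simp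
    have Dy: "gdist E u y \<le> gdist E x y" using bnd[OF u, of y] ex by simp
    have "gdist E v u \<le> max (gdist E v x) (gdist E v y) + 3 * i + 2"
      using G.main_bound[OF assms(7) u assms(4,5) Dx Dy] .
    then show "gdist E u v \<le> max (gdist E x v) (gdist E y v) + 3 * i + 2"
      using G.dsym[OF u assms(7)] G.dsym[OF assms(4,7)] G.dsym[OF assms(5,7)] by simp
  qed
  then have "ecc V E v \<le> max (gdist E x v) (gdist E y v) + 3 * i + 2"
    unfolding ecc_def using fin by simp
  with lo show ?thesis by simp
qed

end
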